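(* Let $T>0$, $x_0,y_0\in\mathbb{R}$, $\gamma_P,\gamma_A>0$, let $a^*$ be the constant action $a^*_t:=\kappa^*(1)$, $t\in[0,T]$, and set $$\beta^*:=\frac{T\gamma_A\gamma_P^2}{2(\gamma_A+\gamma_P)^2}+y_0+T\kappa(\kappa^*(1))-\frac{\gamma_P}{\gamma_A+\gamma_P}\left(x_0+T\kappa^*(1)\right).$$ (i) Let $W\in\mathcal{W}$, so that $(W,a^* )\in\mathcal{C}$. Then $(W,a^* )$ satisfies the Borch rule, i.e. there exists a constant $\alpha>0$ with $$\frac{U_P'\left(X_T^{a^*}-W\right)}{U_A'\left(W-\int_0^T\kappa(a^*_t)\,dt\right)}=\alpha\quad\mathbb{P}\text{-a.s.},$$ if and only if there exists $\beta\in\mathbb{R}$ such that $W=\frac{\gamma_P}{\gamma_A+\gamma_P}X_T^{a^*}+\beta$. Moreover, such a contract $\left(\frac{\gamma_P}{\gamma_A+\gamma_P}X_T^{a^*}+\beta,\,a^*\right)$ belongs to $\mathcal{C}_{PC}$ if and only if $\beta\ge\beta^*$. (ii) With $W^*:=\frac{\gamma_P}{\gamma_A+\gamma_P}X_T^{a^*}+\beta^*$, the contract $(W^*,a^* )$ belongs to $\mathcal{C}_{PC}$ and is optimal for the problem $\sup_{(W,a)\in\mathcal{C}_{PC}}\mathbb{E}[U_P(X_T^a-W)]$.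
   Context: Fix $T>0$. Let $(\Omega,\mathcal{F},\mathbb{P})$ be a probability space carrying a standard one-dimensional Brownian motion $B=(B_t)_{t\in[0,T]}$, and let $\mathbb{F}=(\mathcal{F}_t)_{t\in[0,T]}$ be its natural completed filtration. Let $\mathbb{H}_2$ be the set of $\mathbb{F}$-predictable processes $a=(a_t)_{t\in[0,T]}$ with values in $[0,\infty)$ such that $\mathbb{E}[\exp(q\int_0^T|a_t|^2dt)]<\infty$ for all $q>0$. For $a\in\mathbb{H}_2$ and a fixed $x_0\in\mathbb{R}$, set $X_t^a=x_0+\int_0^t a_s\,ds+B_t$. Let $\mathcal{W}$ be the set of $\mathcal{F}_T$-measurable random variables $W$ with $\mathbb{E}[\exp(qW)]<\infty$ for all $q\in\mathbb{R}\setminus\{0\}$, and $\mathcal{C}=\{(W,a):W\in\mathcal{W},a\in\mathbb{H}_2\}$. The cost function $\kappa:[0,\infty)\to\mathbb{R}$ is strictly convex, continuous, non-decreasing, with invertible derivative $\kappa'$; $\kappa^*(p)=\arg\sup_{x\ge0}(px-\kappa(x))=(\kappa')^{-1}(p)\ge0$ for $p\ge0$. With $\gamma_P,\gamma_A>0$, $U_P(x)=-\exp(-\gamma_P x)$ and $U_A(x)=-\exp(-\gamma_A x)$. For $y_0\in\mathbb{R}$, the participation constraint (PC) of a contract $(W,a)\in\mathcal{C}$ is $\mathbb{E}[U_A(W-\int_0^T\kappa(a_t)dt)]\ge U_A(y_0)$, and $\mathcal{C}_{PC}$ is the set of contracts in $\mathcal{C}$ satisfying the PC. *)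

theory Defs
  imports "HOL-Probability.Probability"
begin

definition strict_convex_on :: "real set \<Rightarrow> (real \<Rightarrow> real) \<Rightarrow> bool" where
  "strict_convex_on S f \<longleftrightarrow> convex S \<and>
     (\<forall>x\<in>S. \<forall>y\<in>S. \<forall>u. x \<noteq> y \<and> 0 < u \<and> u < 1 \<longrightarrow>
        f (u * x + (1 - u) * y) < u * f x + (1 - u) * f y)"

definition expU :: "real \<Rightarrow> real \<Rightarrow> real" where
  "expU g x = - exp (- g * x)"

definition brownian_motion_on :: "'a measure \<Rightarrow> real \<Rightarrow> (real \<Rightarrow> 'a \<Rightarrow> real) \<Rightarrow> bool" where
  "brownian_motion_on M T B \<longleftrightarrow>
     prob_space M \<and>
     (\<forall>t\<in>{0..T}. B t \<in> borel_measurable M) \<and>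
     (AE \<omega> in M. B 0 \<omega> = 0 \<and> continuous_on {0..T} (\<lambda>t. B t \<omega>)) \<and>
     (\<forall>s t. 0 \<le> s \<and> s < t \<and> t \<le> T \<longrightarrow>
        distributed M lborel (\<lambda>\<omega>. B t \<omega> - B s \<omega>) (normal_density 0 (sqrt (t - s)))) \<and>
     (\<forall>(ts :: nat \<Rightarrow> real) n. 0 \<le> ts 0 \<and> ts n \<le> T \<and> (\<forall>i<n. ts i < ts (Suc i)) \<longrightarrow>
        prob_space.indep_vars M (\<lambda>_. borel) (\<lambda>i \<omega>. B (ts (Suc i)) \<omega> - B (ts i) \<omega>) {..<n})"

definition nat_filt :: "'a measure \<Rightarrow> (real \<Rightarrow> 'a \<Rightarrow> real) \<Rightarrow> real \<Rightarrow> 'a set set" where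
  "nat_filt M B t = sigma_sets (space M)
     ({B s -` A \<inter> space M | s A. s \<in> {0..t} \<and> A \<in> sets borel} \<union> null_sets M)"

definition pred_sets :: "'a measure \<Rightarrow> (real \<Rightarrow> 'a \<Rightarrow> real) \<Rightarrow> real \<Rightarrow> (real \<times> 'a) set set" where
  "pred_sets M B T = sigma_sets ({0..T} \<times> space M)
     ({{0} \<times> A | A. A \<in> nat_filt M B 0} \<union>
      {{s<..t} \<times> A | s t A. 0 \<le> s \<and> s < t \<and> t \<le> T \<and> A \<in> nat_filt M B s})"

definition predictable :: "'a measure \<Rightarrow> (real \<Rightarrow> 'a \<Rightarrow> real) \<Rightarrow> real \<Rightarrow> (real \<Rightarrow> 'a \<Rightarrow> real) \<Rightarrow> bool" where
  "predictable M B T a \<longleftrightarrow>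
     (\<forall>A\<in>sets borel. {p \<in> {0..T} \<times> space M. a (fst p) (snd p) \<in> A} \<in> pred_sets M B T)"

text \<open>The action set H_2.  The AE-clause makes explicit that the pathwise integral of a^2 is
  finite a.s., which is implied by finiteness of E[exp(q int a^2)] read with values in [0,infinity].\<close>
definition H2 :: "'a measure \<Rightarrow> (real \<Rightarrow> 'a \<Rightarrow> real) \<Rightarrow> real \<Rightarrow> (real \<Rightarrow> 'a \<Rightarrow> real) set" where
  "H2 M B T = {a. predictable M B T a \<and>
     (\<forall>t\<in>{0..T}. \<forall>\<omega>\<in>space M. 0 \<le> a t \<omega>) \<and>
     (AE \<omega> in M. set_integrable lborel {0..T} (\<lambda>t. (a t \<omega>)\<^sup>2)) \<and>
     (\<forall>q>0. integrable M (\<lambda>\<omega>. exp (q * (LBINT t:{0..T}. (a t \<omega>)\<^sup>2))))}"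

definition Xproc :: "real \<Rightarrow> (real \<Rightarrow> 'a \<Rightarrow> real) \<Rightarrow> (real \<Rightarrow> 'a \<Rightarrow> real) \<Rightarrow> real \<Rightarrow> 'a \<Rightarrow> real" where
  "Xproc x0 B a t \<omega> = x0 + (LBINT s:{0..t}. a s \<omega>) + B t \<omega>"

definition Wset :: "'a measure \<Rightarrow> (real \<Rightarrow> 'a \<Rightarrow> real) \<Rightarrow> real \<Rightarrow> ('a \<Rightarrow> real) set" where
  "Wset M B T = {W. (\<forall>A\<in>sets borel. W -` A \<inter> space M \<in> nat_filt M B T) \<and>
     (\<forall>q. q \<noteq> 0 \<longrightarrow> integrable M (\<lambda>\<omega>. exp (q * W \<omega>)))}"

definition contracts :: "'a measure \<Rightarrow> (real \<Rightarrow> 'a \<Rightarrow> real) \<Rightarrow> real \<Rightarrow> (('a \<Rightarrow> real) \<times> (real \<Rightarrow> 'a \<Rightarrow> real)) set" where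
  "contracts M B T = Wset M B T \<times> H2 M B T"

text \<open>Expectation of a non-positive extended-real random variable, with value in [-infinity,0].\<close>
definition neg_expect :: "'a measure \<Rightarrow> ('a \<Rightarrow> ereal) \<Rightarrow> ereal" where
  "neg_expect M f = - enn2ereal (\<integral>\<^sup>+\<omega>. e2ennreal (- f \<omega>) \<partial>M)"

text \<open>Agent's realized utility U_A(W - int_0^T kappa(a_t) dt); equals -infinity when the
  cost integral is +infinity (kappa is bounded below on [0,infinity)).\<close>
definition agent_util :: "real \<Rightarrow> real \<Rightarrow> (real \<Rightarrow> real) \<Rightarrow> ('a \<Rightarrow> real) \<Rightarrow> (real \<Rightarrow> 'a \<Rightarrow> real) \<Rightarrow> 'a \<Rightarrow> ereal" where
  "agent_util gA T \<kappa> W a \<omega> =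
     (if set_integrable lborel {0..T} (\<lambda>t. \<kappa> (a t \<omega>))
      then ereal (expU gA (W \<omega> - (LBINT t:{0..T}. \<kappa> (a t \<omega>)))) else -\<infinity>)"

definition contracts_PC :: "'a measure \<Rightarrow> (real \<Rightarrow> 'a \<Rightarrow> real) \<Rightarrow> real \<Rightarrow> real \<Rightarrow> (real \<Rightarrow> real) \<Rightarrow> real
    \<Rightarrow> (('a \<Rightarrow> real) \<times> (real \<Rightarrow> 'a \<Rightarrow> real)) set" where
  "contracts_PC M B T gA \<kappa> y0 = {(W, a) \<in> contracts M B T.
     neg_expect M (agent_util gA T \<kappa> W a) \<ge> ereal (expU gA y0)}"

definition principal_value :: "'a measure \<Rightarrow> (real \<Rightarrow> 'a \<Rightarrow> real) \<Rightarrow> real \<Rightarrow> real \<Rightarrow> real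
    \<Rightarrow> ('a \<Rightarrow> real) \<Rightarrow> (real \<Rightarrow> 'a \<Rightarrow> real) \<Rightarrow> ereal" where
  "principal_value M B T x0 gP W a =
     neg_expect M (\<lambda>\<omega>. ereal (expU gP (Xproc x0 B a T \<omega> - W \<omega>)))"

end

theory Submission
  imports Defs
begin

lemma nat_filt_sub:
  assumes BM: "brownian_motion_on M T B" and "t \<le> T"
  shows "nat_filt M B t \<subseteq> sets M"
  unfolding nat_filt_def
proof (rule sets.sigma_sets_subset)
  show "{B s -` A \<inter> space M |s A. s \<in> {0..t} \<and> A \<in> sets borel} \<union> null_sets M \<subseteq> sets M"
    using BM assms(2) unfolding brownian_motion_on_def by (fastforce intro: measurable_sets)
qed

lemma Wset_meas:
  assumes BM: "brownian_motion_on M T B" and W: "W \<in> Wset M B T"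
  shows "W \<in> borel_measurable M"
proof (rule measurableI)
  fix A :: "real set" assume "A \<in> sets borel"
  then show "W -` A \<inter> space M \<in> sets M"
    using W nat_filt_sub[OF BM order_refl] unfolding Wset_def by blast
qed simp

lemma pred_sets_sub:
  assumes BM: "brownian_motion_on M T B" and T: "0 \<le> T"
  shows "pred_sets M B T \<subseteq> sets (lborel \<Otimes>\<^sub>M M)"
  unfolding pred_sets_def
proof (rule sets.sigma_sets_subset')
  show "{0..T} \<times> space M \<in> sets (lborel \<Otimes>\<^sub>M M)" by (rule pair_measureI) auto
  show "{{0} \<times> A |A. A \<in> nat_filt M B 0} \<union>
      {{s<..t} \<times> A |s t A. 0 \<le> s \<and> s < t \<and> t \<le> T \<and> A \<in> nat_filt M B s}
    \<subseteq> sets (lborel \<Otimes>\<^sub>M M)"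
  proof safe
    fix A assume "A \<in> nat_filt M B 0"
    then show "{0} \<times> A \<in> sets (lborel \<Otimes>\<^sub>M M)"
      using nat_filt_sub[OF BM T] by (auto intro!: pair_measureI)
  next
    fix s t A assume "0 \<le> s" "s < t" "t \<le> T" "A \<in> nat_filt M B s"
    then show "{s<..t} \<times> A \<in> sets (lborel \<Otimes>\<^sub>M M)"
      using nat_filt_sub[OF BM, of s] by (auto intro!: pair_measureI)
  qed
qed

lemma pred_meas:
  assumes BM: "brownian_motion_on M T B" and T: "0 \<le> T" and P: "predictable M B T a"
  shows "(\<lambda>p. if p \<in> {0..T} \<times> space M then a (fst p) (snd p) else 0) \<in> borel_measurable (lborel \<Otimes>\<^sub>M M)"
proof (rule measurableI)
  fix A :: "real set" assume A: "A \<in> sets borel"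
  let ?O = "{0..T} \<times> space M"
  have 1: "{p \<in> ?O. a (fst p) (snd p) \<in> A} \<in> sets (lborel \<Otimes>\<^sub>M M)"
    using P A pred_sets_sub[OF BM T] unfolding predictable_def by blast
  have 2: "?O \<in> sets (lborel \<Otimes>\<^sub>M M)" by (rule pair_measureI) auto
  have 3: "space (lborel \<Otimes>\<^sub>M M) - ?O \<in> sets (lborel \<Otimes>\<^sub>M M)" by (rule sets.compl_sets[OF 2])
  show "(\<lambda>p. if p \<in> ?O then a (fst p) (snd p) else 0) -` A \<inter> space (lborel \<Otimes>\<^sub>M M) \<in> sets (lborel \<Otimes>\<^sub>M M)"
  proof (cases "0 \<in> A")
    case True
    have "(\<lambda>p. if p \<in> ?O then a (fst p) (snd p) else 0) -` A \<inter> space (lborel \<Otimes>\<^sub>M M)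
      = {p \<in> ?O. a (fst p) (snd p) \<in> A} \<union> (space (lborel \<Otimes>\<^sub>M M) - ?O)"
      using True by (auto simp: space_pair_measure)
    then show ?thesis using 1 3 by auto
  next
    case False
    have "(\<lambda>p. if p \<in> ?O then a (fst p) (snd p) else 0) -` A \<inter> space (lborel \<Otimes>\<^sub>M M)
      = {p \<in> ?O. a (fst p) (snd p) \<in> A}"
      using False by (auto simp: space_pair_measure split: if_splits)
    then show ?thesis using 1 by auto
  qed
qed simp

lemma int_meas:
  fixes F :: "'a \<times> real \<Rightarrow> real"
  assumes F: "F \<in> borel_measurable (M \<Otimes>\<^sub>M lborel)"
  shows "(\<lambda>\<omega>. LBINT t:{0..T}. F (\<omega>, t)) \<in> borel_measurable M"
    and "{\<omega> \<in> space M. set_integrable lborel {0..T} (\<lambda>t. F (\<omega>, t))} \<in> sets M"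
proof -
  have F': "(\<lambda>(\<omega>, t). indicator {0..T} t *\<^sub>R F (\<omega>, t)) \<in> borel_measurable (M \<Otimes>\<^sub>M lborel)"
    using F by measurable
  show "(\<lambda>\<omega>. LBINT t:{0..T}. F (\<omega>, t)) \<in> borel_measurable M"
    unfolding set_lebesgue_integral_def
    by (rule sigma_finite_measure.borel_measurable_lebesgue_integral[OF _ F']) 
      (rule lborel.sigma_finite_measure_axioms)
  have F'': "(\<lambda>(\<omega>, t). ennreal (norm (indicator {0..T} t *\<^sub>R F (\<omega>, t)))) \<in> borel_measurable (M \<Otimes>\<^sub>M lborel)"
    using F by measurable
  have N: "(\<lambda>\<omega>. \<integral>\<^sup>+t. ennreal (norm (indicator {0..T} t *\<^sub>R F (\<omega>, t))) \<partial>lborel) \<in> borel_measurable M"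
    by (rule sigma_finite_measure.borel_measurable_nn_integral[OF _ F''])
      (rule lborel.sigma_finite_measure_axioms)
  have "{\<omega> \<in> space M. set_integrable lborel {0..T} (\<lambda>t. F (\<omega>, t))}
     = {\<omega> \<in> space M. (\<integral>\<^sup>+t. ennreal (norm (indicator {0..T} t *\<^sub>R F (\<omega>, t))) \<partial>lborel) < \<infinity>}"
    unfolding set_integrable_def integrable_iff_bounded using F by auto
  also have "\<dots> \<in> sets M" using N by measurable
  finally show "{\<omega> \<in> space M. set_integrable lborel {0..T} (\<lambda>t. F (\<omega>, t))} \<in> sets M" .
qed

lemma pred_int_meas:
  fixes \<phi> :: "real \<Rightarrow> real"
  assumes BM: "brownian_motion_on M T B" and T: "0 \<le> T" and P: "predictable M B T a"
    and phi: "continuous_on UNIV \<phi>"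
  shows "(\<lambda>\<omega>. LBINT t:{0..T}. \<phi> (a t \<omega>)) \<in> borel_measurable M"
    and "{\<omega> \<in> space M. set_integrable lborel {0..T} (\<lambda>t. \<phi> (a t \<omega>))} \<in> sets M"
proof -
  let ?G = "\<lambda>p. if p \<in> {0..T} \<times> space M then a (fst p) (snd p) else 0"
  define F where "F = (\<lambda>(\<omega>::'a, t::real). \<phi> (?G (t, \<omega>)))"
  have H: "(\<lambda>p. \<phi> (?G p)) \<in> borel_measurable (lborel \<Otimes>\<^sub>M M)"
    by (rule borel_measurable_continuous_on[OF phi pred_meas[OF BM T P]])
  have "(\<lambda>x. (\<lambda>p. \<phi> (?G p)) ((\<lambda>(x, y). (y, x)) x)) \<in> borel_measurable (M \<Otimes>\<^sub>M lborel)"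
    by (rule measurable_compose[OF measurable_pair_swap' H])
  moreover have "(\<lambda>x. (\<lambda>p. \<phi> (?G p)) ((\<lambda>(x, y). (y, x)) x)) = F"
    unfolding F_def by (auto simp: fun_eq_iff)
  ultimately have F: "F \<in> borel_measurable (M \<Otimes>\<^sub>M lborel)" by simp
  have eq: "(LBINT t:{0..T}. \<phi> (a t \<omega>)) = (LBINT t:{0..T}. F (\<omega>, t))" if "\<omega> \<in> space M" for \<omega>
    by (rule set_lebesgue_integral_cong) (use that in \<open>auto simp: F_def\<close>)
  have eq2: "set_integrable lborel {0..T} (\<lambda>t. \<phi> (a t \<omega>)) = set_integrable lborel {0..T} (\<lambda>t. F (\<omega>, t))"
    if "\<omega> \<in> space M" for \<omega>
    by (rule set_integrable_cong) (use that in \<open>auto simp: F_def\<close>)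
  show "(\<lambda>\<omega>. LBINT t:{0..T}. \<phi> (a t \<omega>)) \<in> borel_measurable M"
    using int_meas(1)[of F M T, OF F] eq by (subst measurable_cong) auto
  have "{\<omega> \<in> space M. set_integrable lborel {0..T} (\<lambda>t. \<phi> (a t \<omega>))}
      = {\<omega> \<in> space M. set_integrable lborel {0..T} (\<lambda>t. F (\<omega>, t))}" using eq2 by auto
  then show "{\<omega> \<in> space M. set_integrable lborel {0..T} (\<lambda>t. \<phi> (a t \<omega>))} \<in> sets M"
    using int_meas(2)[of F M T, OF F] by simp
qed

lemma nn_normal: "0 < \<sigma> \<Longrightarrow> (\<integral>\<^sup>+x. ennreal (normal_density m \<sigma> x) \<partial>lborel) = 1"
  by (subst nn_integral_eq_integral) (auto intro: integrable_normal_density)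

lemma normal_shift:
  assumes T: "0 < T"
  shows "normal_density 0 (sqrt T) x * exp (s * x) = exp (s\<^sup>2 * T / 2) * normal_density (s * T) (sqrt T) x"
proof -
  have sT: "(sqrt T)\<^sup>2 = T" using T by simp
  have e: "-(x - 0)\<^sup>2 / (2 * T) + s * x = s\<^sup>2 * T / 2 + -(x - s * T)\<^sup>2 / (2 * T)"
  proof -
    have "-(x - 0)\<^sup>2 / (2 * T) + s * x = (- x\<^sup>2 + 2 * T * s * x) / (2 * T)" using T by (simp add: field_simps)
    also have "\<dots> = (s\<^sup>2 * T * T - (x - s * T)\<^sup>2) / (2 * T)" by (simp add: power2_eq_square algebra_simps)
    also have "\<dots> = s\<^sup>2 * T / 2 + -(x - s * T)\<^sup>2 / (2 * T)" using T by (simp add: field_simps)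
    finally show ?thesis .
  qed
  have "exp (-(x - 0)\<^sup>2 / (2 * (sqrt T)\<^sup>2)) * exp (s * x) = exp (s\<^sup>2 * T / 2) * exp (-(x - s * T)\<^sup>2 / (2 * (sqrt T)\<^sup>2))"
    unfolding exp_add[symmetric] sT e ..
  then show ?thesis unfolding normal_density_def by (simp only: mult.assoc mult.left_commute)
qed

lemma gauss_mgf:
  assumes BM: "brownian_motion_on M T B" and T: "0 < T"
  shows "(\<integral>\<^sup>+\<omega>. ennreal (exp (s * B T \<omega>)) \<partial>M) = ennreal (exp (s\<^sup>2 * T / 2))"
proof -
  have D: "distributed M lborel (\<lambda>\<omega>. B T \<omega> - B 0 \<omega>) (\<lambda>x. ennreal (normal_density 0 (sqrt T) x))"
    using BM T unfolding brownian_motion_on_def by (metis (no_types) diff_zero order_refl)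
  have AE: "AE \<omega> in M. B 0 \<omega> = 0" using BM unfolding brownian_motion_on_def by auto
  have "(\<integral>\<^sup>+\<omega>. ennreal (exp (s * B T \<omega>)) \<partial>M) = (\<integral>\<^sup>+\<omega>. ennreal (exp (s * (B T \<omega> - B 0 \<omega>))) \<partial>M)"
    by (rule nn_integral_cong_AE) (use AE in auto)
  also have "\<dots> = (\<integral>\<^sup>+x. ennreal (normal_density 0 (sqrt T) x) * ennreal (exp (s * x)) \<partial>lborel)"
    using distributed_nn_integral[OF D, of "\<lambda>x. ennreal (exp (s * x))"] by simp
  also have "\<dots> = (\<integral>\<^sup>+x. ennreal (exp (s\<^sup>2 * T / 2)) * ennreal (normal_density (s * T) (sqrt T) x) \<partial>lborel)"
    by (rule nn_integral_cong) (simp add: ennreal_mult'[symmetric] normal_shift[OF T])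
  also have "\<dots> = ennreal (exp (s\<^sup>2 * T / 2))"
    by (subst nn_integral_cmult) (auto simp: nn_normal T)
  finally show ?thesis .
qed

lemma strict_convex_imp_convex:
  assumes "strict_convex_on S f" shows "convex_on S f"
  unfolding convex_on_def
proof (intro conjI ballI allI impI)
  show "convex S" using assms unfolding strict_convex_on_def by auto
  fix x y u v :: real assume xy: "x \<in> S" "y \<in> S" and uv: "0 \<le> u" "0 \<le> v" "u + v = 1"
  show "f (u *\<^sub>R x + v *\<^sub>R y) \<le> u * f x + v * f y"
  proof (cases "x = y \<or> u = 0 \<or> v = 0")
    case True
    then show ?thesis
    proof (elim disjE)
      assume "x = y" then show ?thesis using uv by (simp add: distrib_right[symmetric])
    next
      assume "u = 0" then show ?thesis using uv by simp
    next
      assume "v = 0" then show ?thesis using uv by simp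
    qed
  next
    case False
    then have "0 < u" "u < 1" "x \<noteq> y" using uv by auto
    then have "f (u * x + (1 - u) * y) < u * f x + (1 - u) * f y"
      using assms xy unfolding strict_convex_on_def by blast
    moreover have "v = 1 - u" using uv by simp
    ultimately show ?thesis by simp
  qed
qed

lemma kappa_tangent:
  fixes \<kappa> \<kappa>' :: "real \<Rightarrow> real"
  assumes sc: "strict_convex_on {0..} \<kappa>"
    and der: "\<And>x. 0 \<le> x \<Longrightarrow> (\<kappa> has_real_derivative \<kappa>' x) (at x within {0..})"
    and c: "0 \<le> c" and x: "0 \<le> x"
  shows "\<kappa> c + \<kappa>' c * (x - c) \<le> \<kappa> x"
proof -
  have cv: "convex_on {0..} \<kappa>" by (rule strict_convex_imp_convex[OF sc])
  consider "x = c" | "x < c" | "c < x" by linarith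
  then show ?thesis
  proof cases
    case 1 then show ?thesis by simp
  next
    case 2
    then have ci: "c \<in> interior {0::real..}" using x by simp
    have "\<kappa>' c * (x - c) \<le> \<kappa> x - \<kappa> c"
      by (rule convex_on_imp_above_tangent[OF cv _ ci _ der[OF c]]) (use x in \<open>auto simp: is_interval_connected\<close>)
    then show ?thesis by simp
  next
    case 3
    have lim: "((\<lambda>y. (\<kappa> y - \<kappa> c) / (y - c)) \<longlongrightarrow> \<kappa>' c) (at_right c)"
      using der[OF c] unfolding has_field_derivative_iff
      by (rule tendsto_within_subset) (use c in auto)
    have ev: "\<forall>\<^sub>F y in at_right c. (\<kappa> y - \<kappa> c) / (y - c) \<le> (\<kappa> x - \<kappa> c) / (x - c)"
    proof (rule eventually_at_rightI[OF _ 3])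
      fix y assume y: "y \<in> {c<..<x}"
      define t where "t = (y - c) / (x - c)"
      have t: "0 < t" "t < 1" using y 3 by (auto simp: t_def field_simps)
      have tx: "t * (x - c) = y - c" using 3 by (simp add: t_def)
      have "(1 - t) * c + t * x = c + t * (x - c)" by (simp add: algebra_simps)
      then have yt: "y = (1 - t) * c + t * x" using tx by simp
      have "\<kappa> ((1 - t) *\<^sub>R c + t *\<^sub>R x) \<le> (1 - t) * \<kappa> c + t * \<kappa> x"
        using cv c x t unfolding convex_on_def by auto
      then have "\<kappa> y \<le> (1 - t) * \<kappa> c + t * \<kappa> x" using yt by simp
      then have "\<kappa> y - \<kappa> c \<le> t * (\<kappa> x - \<kappa> c)" by (simp add: algebra_simps)
      then have "(\<kappa> y - \<kappa> c) / (y - c) \<le> t * (\<kappa> x - \<kappa> c) / (y - c)"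
        using y by (simp add: divide_right_mono)
      also have "\<dots> = (\<kappa> x - \<kappa> c) / (x - c)" unfolding tx[symmetric] using t by simp
      finally show "(\<kappa> y - \<kappa> c) / (y - c) \<le> (\<kappa> x - \<kappa> c) / (x - c)" .
    qed
    have "\<kappa>' c \<le> (\<kappa> x - \<kappa> c) / (x - c)"
      by (rule tendsto_upperbound[OF lim ev]) simp
    then show ?thesis using 3 by (simp add: field_simps)
  qed
qed

lemma exp_tangent: "exp a * (1 + (b - a)) \<le> exp (b::real)"
proof -
  have "exp a * (1 + (b - a)) \<le> exp a * exp (b - a)"
    by (rule mult_left_mono) (auto simp: exp_ge_add_one_self)
  also have "\<dots> = exp b" by (simp add: exp_diff)
  finally show ?thesis .
qed

lemma key_ineq:
  fixes gP gA lam u v u' v' :: real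
  assumes gP: "0 < gP" and gA: "0 < gA"
    and lam: "lam * gA * exp (- gA * v') = gP * exp (- gP * u')"
    and uv: "u + v \<le> u' + v'"
  shows "exp (- gP * u') + lam * exp (- gA * v') \<le> exp (- gP * u) + lam * exp (- gA * v)"
proof -
  define P where "P = exp (- gP * u')"
  define A where "A = exp (- gA * v')"
  have P: "0 < P" "0 < A" by (auto simp: P_def A_def)
  have "0 < lam * (gA * A)" using lam gP P unfolding P_def[symmetric] A_def[symmetric] by (simp add: mult.assoc)
  moreover have "0 < gA * A" using P gA by simp
  ultimately have lp: "0 \<le> lam" by (simp add: zero_less_mult_iff)
  have h1: "P * (1 + (- gP * u - - gP * u')) \<le> exp (- gP * u)"
    unfolding P_def by (rule exp_tangent)
  have "lam * (A * (1 + (- gA * v - - gA * v'))) \<le> lam * exp (- gA * v)"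
    unfolding A_def by (rule mult_left_mono[OF exp_tangent lp])
  moreover have "lam * (A * (1 + (- gA * v - - gA * v'))) = lam * A - (lam * gA * A) * (v - v')"
    by (simp add: algebra_simps)
  moreover have "lam * gA * A = gP * P" using lam by (simp add: P_def A_def)
  ultimately have h2: "lam * A - gP * P * (v - v') \<le> lam * exp (- gA * v)" by simp
  have h1': "P - gP * P * (u - u') \<le> exp (- gP * u)" using h1 by (simp add: algebra_simps)
  have "gP * P * ((u - u') + (v - v')) \<le> 0"
    by (rule mult_nonneg_nonpos) (use gP P uv in auto)
  then have "gP * P * (u - u') + gP * P * (v - v') \<le> 0" by (simp add: distrib_left)
  then show ?thesis using h1' h2 unfolding P_def[symmetric] A_def[symmetric] by linarith
qed

lemma set_int_const: "set_integrable lborel {0..T::real} (\<lambda>_. c::real)"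
  by (simp add: set_integrable_def integrable_indicator_iff emeasure_lborel_Icc_eq)

lemma lbint_const: "0 \<le> T \<Longrightarrow> (LBINT t:{0..T::real}. (c::real)) = T * c"
  by (simp add: set_integral_const)

lemma path_ineq:
  fixes \<kappa> f :: "real \<Rightarrow> real"
  assumes T: "0 \<le> T" and tang: "\<And>x. 0 \<le> x \<Longrightarrow> \<kappa> k + (x - k) \<le> \<kappa> x"
    and nn: "\<And>t. t \<in> {0..T} \<Longrightarrow> 0 \<le> f t"
    and int: "set_integrable lborel {0..T} (\<lambda>t. \<kappa> (f t))"
  shows "(LBINT t:{0..T}. f t) - (LBINT t:{0..T}. \<kappa> (f t)) \<le> T * k - T * \<kappa> k"
proof (cases "set_integrable lborel {0..T} f")
  case True
  have "(LBINT t:{0..T}. f t) - (LBINT t:{0..T}. \<kappa> (f t)) = (LBINT t:{0..T}. f t - \<kappa> (f t))"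
    by (rule set_integral_diff(2)[OF True int, symmetric])
  also have "\<dots> \<le> (LBINT t:{0..T}. k - \<kappa> k)"
    by (rule set_integral_mono[OF set_integral_diff(1)[OF True int] set_int_const])
      (use tang nn in force)
  also have "\<dots> = T * k - T * \<kappa> k" using T by (simp add: lbint_const algebra_simps)
  finally show ?thesis .
next
  case False
  then have "(LBINT t:{0..T}. f t) = 0"
    unfolding set_integrable_def set_lebesgue_integral_def by (rule not_integrable_integral_eq)
  moreover have "(LBINT t:{0..T}. \<kappa> k - k) \<le> (LBINT t:{0..T}. \<kappa> (f t))"
    by (rule set_integral_mono[OF set_int_const int]) (use tang nn in force)
  moreover have "(LBINT t:{0..T}. \<kappa> k - k) = T * \<kappa> k - T * k" using T by (simp add: lbint_const algebra_simps)
  ultimately show ?thesis by linarith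
qed

lemma deriv_expU: "deriv (expU g) x = g * exp (- g * x)"
proof -
  have "((\<lambda>x. - exp (- g * x)) has_real_derivative g * exp (- g * x)) (at x)"
    by (auto intro!: derivative_eq_intros)
  then show ?thesis unfolding expU_def[abs_def] by (rule DERIV_imp_deriv)
qed

lemma borch_pt:
  fixes gP gA X W K \<alpha> :: real
  assumes gP: "0 < gP" and gA: "0 < gA" and a: "0 < \<alpha>"
  shows "(gP * exp (- gP * (X - W)) / (gA * exp (- gA * (W - K))) = \<alpha>) \<longleftrightarrow>
         W = gP / (gA + gP) * X + (ln (\<alpha> * gA / gP) + gA * K) / (gA + gP)"
proof -
  define Q where "Q = (gA + gP) * W - gP * X - gA * K"
  have "gP * exp (- gP * (X - W)) / (gA * exp (- gA * (W - K))) = gP / gA * exp Q"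
  proof -
    have "exp (- gP * (X - W)) / exp (- gA * (W - K)) = exp Q"
      unfolding exp_diff[symmetric] Q_def by (simp add: algebra_simps)
    then show ?thesis by (metis times_divide_times_eq)
  qed
  moreover have "(gP / gA * exp Q = \<alpha>) \<longleftrightarrow> exp Q = \<alpha> * gA / gP"
    using gP gA by (auto simp: field_simps)
  moreover have "exp Q = \<alpha> * gA / gP \<longleftrightarrow> Q = ln (\<alpha> * gA / gP)"
    using a gA gP by (metis divide_pos_pos exp_ln ln_exp mult_pos_pos)
  moreover have "Q = ln (\<alpha> * gA / gP) \<longleftrightarrow> W = gP / (gA + gP) * X + (ln (\<alpha> * gA / gP) + gA * K) / (gA + gP)"
  proof -
    define L where "L = ln (\<alpha> * gA / gP)"
    have s: "0 < gA + gP" using gA gP by simp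
    have e1: "Q = L \<longleftrightarrow> (gA + gP) * W = gP * X + L + gA * K" unfolding Q_def by (rule iffI) linarith+
    have e2: "(gA + gP) * W = gP * X + L + gA * K \<longleftrightarrow> W = (gP * X + L + gA * K) / (gA + gP)"
      using s by (simp add: eq_divide_eq mult.commute)
    have e3: "gP / (gA + gP) * X + (L + gA * K) / (gA + gP) = (gP * X + L + gA * K) / (gA + gP)"
      by (simp add: add_divide_distrib)
    show ?thesis using e1 e2 e3 unfolding L_def by simp
  qed
  ultimately show ?thesis by simp
qed

lemma optimality:
  fixes \<kappa> :: "real \<Rightarrow> real" and W Ws :: "'a \<Rightarrow> real" and a :: "real \<Rightarrow> 'a \<Rightarrow> real"
  assumes BM: "brownian_motion_on M T B" and T: "0 < T" and gP: "0 < gP" and gA: "0 < gA"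
    and kc: "continuous_on {0..} \<kappa>"
    and tang: "\<And>x. 0 \<le> x \<Longrightarrow> \<kappa> k + (x - k) \<le> \<kappa> x"
    and aH: "a \<in> H2 M B T" and WW: "W \<in> Wset M B T"
    and PC: "ereal (expU gA y0) \<le> neg_expect M (agent_util gA T \<kappa> W a)"
    and Ws: "\<And>\<omega>. Ws \<omega> = c * (x0 + T * k + B T \<omega>) + bs"
    and c: "c = gP / (gA + gP)"
    and Gs: "(\<integral>\<^sup>+\<omega>. ennreal (exp (- gA * (Ws \<omega> - T * \<kappa> k))) \<partial>M) = ennreal (exp (- gA * y0))"
  shows "(\<integral>\<^sup>+\<omega>. ennreal (exp (- gP * (x0 + T * k + B T \<omega> - Ws \<omega>))) \<partial>M)
       \<le> (\<integral>\<^sup>+\<omega>. ennreal (exp (- gP * (Xproc x0 B a T \<omega> - W \<omega>))) \<partial>M)"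
proof -
  have BTm: "B T \<in> borel_measurable M" using BM T unfolding brownian_motion_on_def by auto
  have P: "predictable M B T a" and nn: "\<And>t \<omega>. t \<in> {0..T} \<Longrightarrow> \<omega> \<in> space M \<Longrightarrow> 0 \<le> a t \<omega>"
    using aH unfolding H2_def by auto
  define \<kappa>0 where "\<kappa>0 = (\<lambda>x. \<kappa> (max 0 x))"
  have k0c: "continuous_on UNIV \<kappa>0" unfolding \<kappa>0_def
    by (rule continuous_on_compose2[OF kc]) (auto intro!: continuous_intros)
  have Am: "(\<lambda>\<omega>. LBINT t:{0..T}. a t \<omega>) \<in> borel_measurable M"
    using pred_int_meas(1)[OF BM _ P, of "\<lambda>x. x"] T by simp
  have eqk: "\<And>\<omega> t. \<omega> \<in> space M \<Longrightarrow> t \<in> {0..T} \<Longrightarrow> \<kappa> (a t \<omega>) = \<kappa>0 (a t \<omega>)"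
    using nn unfolding \<kappa>0_def by (simp add: max_def)
  have Kq: "(LBINT t:{0..T}. \<kappa> (a t \<omega>)) = (LBINT t:{0..T}. \<kappa>0 (a t \<omega>))" if "\<omega> \<in> space M" for \<omega>
    by (rule set_lebesgue_integral_cong) (use eqk that in auto)
  have Iq: "set_integrable lborel {0..T} (\<lambda>t. \<kappa> (a t \<omega>)) = set_integrable lborel {0..T} (\<lambda>t. \<kappa>0 (a t \<omega>))"
    if "\<omega> \<in> space M" for \<omega>
    by (rule set_integrable_cong) (use eqk that in auto)
  have Km: "(\<lambda>\<omega>. LBINT t:{0..T}. \<kappa> (a t \<omega>)) \<in> borel_measurable M"
    using pred_int_meas(1)[OF BM _ P k0c] T Kq by (subst measurable_cong) auto
  have "{\<omega> \<in> space M. set_integrable lborel {0..T} (\<lambda>t. \<kappa> (a t \<omega>))}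
      = {\<omega> \<in> space M. set_integrable lborel {0..T} (\<lambda>t. \<kappa>0 (a t \<omega>))}" using Iq by auto
  then have I: "{\<omega> \<in> space M. set_integrable lborel {0..T} (\<lambda>t. \<kappa> (a t \<omega>))} \<in> sets M"
    using pred_int_meas(2)[OF BM _ P k0c] T by simp
  have Wm: "W \<in> borel_measurable M" by (rule Wset_meas[OF BM WW])
  define K where "K = (\<lambda>\<omega>. LBINT t:{0..T}. \<kappa> (a t \<omega>))"
  define g where "g = (\<lambda>\<omega>. if set_integrable lborel {0..T} (\<lambda>t. \<kappa> (a t \<omega>))
      then ennreal (exp (- gA * (W \<omega> - K \<omega>))) else \<infinity>)"
  have gm: "g \<in> borel_measurable M" unfolding g_def
    by (rule measurable_If[OF _ _ I]) (use Wm Km in \<open>auto simp: K_def\<close>)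
  define f where "f = (\<lambda>\<omega>. ennreal (exp (- gP * (Xproc x0 B a T \<omega> - W \<omega>))))"
  have fm: "f \<in> borel_measurable M" unfolding f_def Xproc_def using Am BTm Wm by measurable
  define h where "h = (\<lambda>\<omega>. ennreal (exp (- gP * (x0 + T * k + B T \<omega> - Ws \<omega>))))"
  define gs where "gs = (\<lambda>\<omega>. ennreal (exp (- gA * (Ws \<omega> - T * \<kappa> k))))"
  have Wsf: "Ws = (\<lambda>\<omega>. c * (x0 + T * k + B T \<omega>) + bs)" using Ws by auto
  have hm: "h \<in> borel_measurable M" unfolding h_def Wsf using BTm by measurable
  have gsm: "gs \<in> borel_measurable M" unfolding gs_def Wsf using BTm by measurable
  define lam where "lam = gP / gA * exp ((gA + gP) * bs - gA * T * \<kappa> k)"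
  have lam0: "0 < lam" unfolding lam_def using gP gA by simp
  have gc: "gA * c = gP * (1 - c)" using c gA gP by (simp add: field_simps)
  have lamid: "lam * gA * exp (- gA * (Ws \<omega> - T * \<kappa> k)) = gP * exp (- gP * (x0 + T * k + B T \<omega> - Ws \<omega>))" for \<omega>
  proof -
    define X where "X = x0 + T * k + B T \<omega>"
    have gcX: "gA * c * X = gP * X - gP * c * X"
    proof -
      have "gA * c * X = gP * (1 - c) * X" using gc by simp
      then show ?thesis by (simp add: algebra_simps)
    qed
    have "(gA + gP) * bs - gA * T * \<kappa> k + (- gA * (Ws \<omega> - T * \<kappa> k)) = - gP * (X - Ws \<omega>)"
      unfolding Ws X_def[symmetric] using gcX by (simp add: algebra_simps)
    then have "exp ((gA + gP) * bs - gA * T * \<kappa> k) * exp (- gA * (Ws \<omega> - T * \<kappa> k)) = exp (- gP * (X - Ws \<omega>))"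
      by (simp add: exp_add[symmetric])
    then show ?thesis unfolding lam_def X_def using gA by (simp add: field_simps)
  qed
  have pw: "h \<omega> + ennreal lam * gs \<omega> \<le> f \<omega> + ennreal lam * g \<omega>" if \<omega>: "\<omega> \<in> space M" for \<omega>
  proof (cases "set_integrable lborel {0..T} (\<lambda>t. \<kappa> (a t \<omega>))")
    case True
    have pi: "(LBINT t:{0..T}. a t \<omega>) - K \<omega> \<le> T * k - T * \<kappa> k" unfolding K_def
      by (rule path_ineq[OF _ tang]) (use T nn \<omega> True in auto)
    have r: "exp (- gP * (x0 + T * k + B T \<omega> - Ws \<omega>)) + lam * exp (- gA * (Ws \<omega> - T * \<kappa> k))
        \<le> exp (- gP * (Xproc x0 B a T \<omega> - W \<omega>)) + lam * exp (- gA * (W \<omega> - K \<omega>))"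
      by (rule key_ineq[OF gP gA lamid]) (use pi in \<open>simp add: Xproc_def\<close>)
    have e1: "h \<omega> + ennreal lam * gs \<omega> = ennreal (exp (- gP * (x0 + T * k + B T \<omega> - Ws \<omega>)) + lam * exp (- gA * (Ws \<omega> - T * \<kappa> k)))"
      unfolding h_def gs_def using lam0 by (simp add: ennreal_mult ennreal_plus)
    have e2: "f \<omega> + ennreal lam * g \<omega> = ennreal (exp (- gP * (Xproc x0 B a T \<omega> - W \<omega>)) + lam * exp (- gA * (W \<omega> - K \<omega>)))"
      unfolding f_def g_def using lam0 True by (simp add: ennreal_mult ennreal_plus)
    show ?thesis unfolding e1 e2 by (rule ennreal_leI[OF r])
  next
    case False
    then have "f \<omega> + ennreal lam * g \<omega> = \<infinity>" unfolding g_def using lam0 by (simp add: ennreal_mult_top)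
    then show ?thesis by (metis top_greatest infinity_ennreal_def)
  qed
  have NE: "neg_expect M (agent_util gA T \<kappa> W a) = - enn2ereal (\<integral>\<^sup>+\<omega>. g \<omega> \<partial>M)"
  proof -
    have "e2ennreal (- agent_util gA T \<kappa> W a \<omega>) = g \<omega>" for \<omega>
      by (simp add: agent_util_def g_def K_def expU_def e2ennreal_ereal)
    then show ?thesis unfolding neg_expect_def by simp
  qed
  have "ereal (- exp (- gA * y0)) \<le> - enn2ereal (\<integral>\<^sup>+\<omega>. g \<omega> \<partial>M)"
    using PC unfolding NE by (simp add: expU_def)
  then have "enn2ereal (\<integral>\<^sup>+\<omega>. g \<omega> \<partial>M) \<le> enn2ereal (ennreal (exp (- gA * y0)))"
    by (subst enn2ereal_ennreal) (auto simp: ereal_minus_le_minus simp flip: uminus_ereal.simps(1))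
  then have PC': "(\<integral>\<^sup>+\<omega>. g \<omega> \<partial>M) \<le> ennreal (exp (- gA * y0))"
    by (simp add: less_eq_ennreal.rep_eq)
  have "ennreal lam * ennreal (exp (- gA * y0)) + (\<integral>\<^sup>+\<omega>. h \<omega> \<partial>M) = (\<integral>\<^sup>+\<omega>. h \<omega> + ennreal lam * gs \<omega> \<partial>M)"
    using hm gsm by (simp add: nn_integral_add nn_integral_cmult Gs[folded gs_def] add.commute)
  also have "\<dots> \<le> (\<integral>\<^sup>+\<omega>. f \<omega> + ennreal lam * g \<omega> \<partial>M)"
    by (rule nn_integral_mono) (rule pw)
  also have "\<dots> = (\<integral>\<^sup>+\<omega>. f \<omega> \<partial>M) + ennreal lam * (\<integral>\<^sup>+\<omega>. g \<omega> \<partial>M)"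
    using fm gm by (simp add: nn_integral_add nn_integral_cmult)
  also have "\<dots> \<le> (\<integral>\<^sup>+\<omega>. f \<omega> \<partial>M) + ennreal lam * ennreal (exp (- gA * y0))"
    using PC' by (intro add_left_mono mult_left_mono) auto
  also have "\<dots> = ennreal lam * ennreal (exp (- gA * y0)) + (\<integral>\<^sup>+\<omega>. f \<omega> \<partial>M)" by (simp add: add.commute)
  finally have "(\<integral>\<^sup>+\<omega>. h \<omega> \<partial>M) \<le> (\<integral>\<^sup>+\<omega>. f \<omega> \<partial>M)"
    by (simp add: ennreal_add_left_cancel_le ennreal_mult_eq_top_iff)
  then show ?thesis unfolding h_def f_def .
qed

lemma mgf_aff:
  assumes BM: "brownian_motion_on M T B" and T: "0 < T"
  shows "(\<integral>\<^sup>+\<omega>. ennreal (exp (s * B T \<omega> + d)) \<partial>M) = ennreal (exp (d + s\<^sup>2 * T / 2))"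
proof -
  have BTm: "B T \<in> borel_measurable M" using BM T unfolding brownian_motion_on_def by auto
  have "(\<integral>\<^sup>+\<omega>. ennreal (exp (s * B T \<omega> + d)) \<partial>M) = (\<integral>\<^sup>+\<omega>. ennreal (exp d) * ennreal (exp (s * B T \<omega>)) \<partial>M)"
    by (rule nn_integral_cong) (simp add: exp_add ennreal_mult' mult.commute)
  also have "\<dots> = ennreal (exp d) * (\<integral>\<^sup>+\<omega>. ennreal (exp (s * B T \<omega>)) \<partial>M)"
    using BTm by (simp add: nn_integral_cmult)
  also have "\<dots> = ennreal (exp (d + s\<^sup>2 * T / 2))"
    by (simp add: gauss_mgf[OF BM T] exp_add ennreal_mult')
  finally show ?thesis .
qed

theorem theorem3p4:
  fixes M :: "'a measure" and B :: "real \<Rightarrow> 'a \<Rightarrow> real"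
    and T x0 y0 gP gA :: real
    and \<kappa> \<kappa>' :: "real \<Rightarrow> real"
  assumes T_pos: "0 < T"
    and BM: "brownian_motion_on M T B"
    and gP_pos: "0 < gP" and gA_pos: "0 < gA"
    and kappa_strict_convex: "strict_convex_on {0..} \<kappa>"
    and kappa_cont: "continuous_on {0..} \<kappa>"
    and kappa_mono: "mono_on {0..} \<kappa>"
    and kappa_deriv: "\<And>x. 0 \<le> x \<Longrightarrow> (\<kappa> has_real_derivative \<kappa>' x) (at x within {0..})"
    and kappa'_inv: "bij_betw \<kappa>' {0..} {0..}"
  defines "kstar \<equiv> inv_into {0..} \<kappa>' 1"
  defines "astar \<equiv> (\<lambda>(t::real) (\<omega>::'a). kstar)"
  defines "c \<equiv> gP / (gA + gP)"
  defines "betastar \<equiv> T * gA * gP\<^sup>2 / (2 * (gA + gP)\<^sup>2) + y0 + T * \<kappa> kstar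
                       - c * (x0 + T * kstar)"
  defines "Wstar \<equiv> (\<lambda>\<omega>. c * Xproc x0 B astar T \<omega> + betastar)"
  shows
    "(\<forall>W \<in> Wset M B T.
        (W, astar) \<in> contracts M B T \<and>
        ((\<exists>\<alpha>>0. AE \<omega> in M.
            deriv (expU gP) (Xproc x0 B astar T \<omega> - W \<omega>)
              / deriv (expU gA) (W \<omega> - (LBINT t:{0..T}. \<kappa> (astar t \<omega>))) = \<alpha>)
         \<longleftrightarrow> (\<exists>\<beta>::real. AE \<omega> in M. W \<omega> = c * Xproc x0 B astar T \<omega> + \<beta>)))
     \<and> (\<forall>\<beta>::real. ((\<lambda>\<omega>. c * Xproc x0 B astar T \<omega> + \<beta>), astar) \<in> contracts_PC M B T gA \<kappa> y0
                   \<longleftrightarrow> \<beta> \<ge> betastar)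
     \<and> (Wstar, astar) \<in> contracts_PC M B T gA \<kappa> y0
     \<and> (\<forall>(W, a) \<in> contracts_PC M B T gA \<kappa> y0.
          principal_value M B T x0 gP W a \<le> principal_value M B T x0 gP Wstar astar)"
proof -
  have PS: "prob_space M" using BM unfolding brownian_motion_on_def by auto
  have BTm: "B T \<in> borel_measurable M" using BM T_pos unfolding brownian_motion_on_def by auto
  have surj: "\<kappa>' ` {0..} = {0..}" using bij_betw_imp_surj_on[OF kappa'_inv] .
  have k0: "0 \<le> kstar" unfolding kstar_def using inv_into_into[of 1 \<kappa>' "{0..}"] surj by auto
  have kd: "\<kappa>' kstar = 1" unfolding kstar_def using surj by (simp add: f_inv_into_f)
  have tang: "\<And>x. 0 \<le> x \<Longrightarrow> \<kappa> kstar + (x - kstar) \<le> \<kappa> x"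
    using kappa_tangent[OF kappa_strict_convex kappa_deriv k0] kd by simp
  have Xs: "\<And>\<omega>. Xproc x0 B astar T \<omega> = x0 + T * kstar + B T \<omega>"
    unfolding Xproc_def astar_def using T_pos by (simp add: lbint_const)
  have Kc: "\<And>\<omega>. (LBINT t:{0..T}. \<kappa> (astar t \<omega>)) = T * \<kappa> kstar"
    unfolding astar_def using T_pos by (simp add: lbint_const)
  have Ic: "\<And>\<omega>. set_integrable lborel {0..T} (\<lambda>t. \<kappa> (astar t \<omega>))"
    unfolding astar_def by (rule set_int_const)
  have AU: "\<And>W \<omega>. agent_util gA T \<kappa> W astar \<omega> = ereal (expU gA (W \<omega> - T * \<kappa> kstar))"
    unfolding agent_util_def using Ic Kc by simp
  have aH: "astar \<in> H2 M B T"
  proof -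
    have "predictable M B T astar"
      unfolding predictable_def pred_sets_def astar_def
    proof
      fix A :: "real set" assume "A \<in> sets borel"
      show "{p \<in> {0..T} \<times> space M. kstar \<in> A} \<in> sigma_sets ({0..T} \<times> space M)
        ({{0} \<times> A |A. A \<in> nat_filt M B 0} \<union>
         {{s<..t} \<times> A |s t A. 0 \<le> s \<and> s < t \<and> t \<le> T \<and> A \<in> nat_filt M B s})"
        by (cases "kstar \<in> A") (auto intro: sigma_sets_top sigma_sets.Empty)
    qed
    moreover have "integrable M (\<lambda>\<omega>. exp (q * (LBINT t:{0..T}. (astar t \<omega>)\<^sup>2)))" for q
    proof -
      interpret prob_space M by (rule PS)
      show ?thesis by (simp add: astar_def)
    qed
    ultimately show ?thesis unfolding H2_def using k0 by (auto simp: astar_def set_int_const)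
  qed
  define Wb where "Wb = (\<lambda>\<beta> \<omega>. c * Xproc x0 B astar T \<omega> + \<beta>)"
  have Wb_eq: "\<And>\<beta> \<omega>. Wb \<beta> \<omega> = c * (x0 + T * kstar + B T \<omega>) + \<beta>"
    unfolding Wb_def Xs by simp
  have WbW: "Wb \<beta> \<in> Wset M B T" for \<beta>
  proof -
    have "Wb \<beta> -` A \<inter> space M \<in> nat_filt M B T" if A: "A \<in> sets borel" for A
    proof -
      have fm: "(\<lambda>y. c * (x0 + T * kstar + y) + \<beta>) \<in> borel_measurable borel" by measurable
      then have A': "(\<lambda>y. c * (x0 + T * kstar + y) + \<beta>) -` A \<in> sets borel"
        using measurable_sets[OF fm A] by simp
      have "Wb \<beta> -` A \<inter> space M = B T -` ((\<lambda>y. c * (x0 + T * kstar + y) + \<beta>) -` A) \<inter> space M"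
        by (auto simp: Wb_eq)
      moreover have "B T -` ((\<lambda>y. c * (x0 + T * kstar + y) + \<beta>) -` A) \<inter> space M
         \<in> {B s -` A \<inter> space M |s A. s \<in> {0..T} \<and> A \<in> sets borel}"
        unfolding mem_Collect_eq
        by (rule exI[of _ T], rule exI[of _ "(\<lambda>y. c * (x0 + T * kstar + y) + \<beta>) -` A"]) (use A' T_pos in simp)
      ultimately show ?thesis unfolding nat_filt_def
        by (intro sigma_sets.Basic) simp
    qed
    moreover have "integrable M (\<lambda>\<omega>. exp (q * Wb \<beta> \<omega>))" for q
    proof (rule integrableI_nonneg)
      show "(\<lambda>\<omega>. exp (q * Wb \<beta> \<omega>)) \<in> borel_measurable M" unfolding Wb_eq using BTm by measurable
      show "AE x in M. 0 \<le> exp (q * Wb \<beta> x)" by simp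
      have "(\<integral>\<^sup>+\<omega>. ennreal (exp (q * Wb \<beta> \<omega>)) \<partial>M) = (\<integral>\<^sup>+\<omega>. ennreal (exp ((q * c) * B T \<omega> + q * (c * (x0 + T * kstar) + \<beta>))) \<partial>M)"
        by (rule nn_integral_cong) (simp add: Wb_eq algebra_simps)
      also have "\<dots> = ennreal (exp (q * (c * (x0 + T * kstar) + \<beta>) + (q * c)\<^sup>2 * T / 2))"
        by (rule mgf_aff[OF BM T_pos])
      finally show "(\<integral>\<^sup>+\<omega>. ennreal (exp (q * Wb \<beta> \<omega>)) \<partial>M) < \<infinity>" by simp
    qed
    ultimately show ?thesis unfolding Wset_def by blast
  qed
  define E where "E = (\<lambda>\<beta>. - gA * (c * (x0 + T * kstar) + \<beta> - T * \<kappa> kstar) + (- gA * c)\<^sup>2 * T / 2)"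
  have bs1: "T * gA * gP\<^sup>2 / (2 * (gA + gP)\<^sup>2) = gA * c\<^sup>2 * T / 2"
    unfolding c_def by (simp add: power_divide mult_ac)
  have bsd: "betastar = gA * c\<^sup>2 * T / 2 + y0 + T * \<kappa> kstar - c * (x0 + T * kstar)"
    unfolding betastar_def bs1 ..
  have Eeq: "E \<beta> = - gA * y0 - gA * (\<beta> - betastar)" for \<beta>
    unfolding E_def bsd by (simp add: power2_eq_square algebra_simps)
  have Gb: "(\<integral>\<^sup>+\<omega>. ennreal (exp (- gA * (Wb \<beta> \<omega> - T * \<kappa> kstar))) \<partial>M) = ennreal (exp (E \<beta>))" for \<beta>
  proof -
    have "(\<integral>\<^sup>+\<omega>. ennreal (exp (- gA * (Wb \<beta> \<omega> - T * \<kappa> kstar))) \<partial>M)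
        = (\<integral>\<^sup>+\<omega>. ennreal (exp ((- gA * c) * B T \<omega> + - gA * (c * (x0 + T * kstar) + \<beta> - T * \<kappa> kstar))) \<partial>M)"
      by (rule nn_integral_cong) (simp add: Wb_eq algebra_simps)
    also have "\<dots> = ennreal (exp (E \<beta>))" unfolding E_def by (rule mgf_aff[OF BM T_pos])
    finally show ?thesis .
  qed
  have NEb: "neg_expect M (agent_util gA T \<kappa> (Wb \<beta>) astar) = ereal (- exp (E \<beta>))" for \<beta>
  proof -
    have "e2ennreal (- agent_util gA T \<kappa> (Wb \<beta>) astar \<omega>) = ennreal (exp (- gA * (Wb \<beta> \<omega> - T * \<kappa> kstar)))" for \<omega>
      by (simp add: AU expU_def e2ennreal_ereal)
    then show ?thesis unfolding neg_expect_def using Gb by simp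
  qed
  have PCb: "(Wb \<beta>, astar) \<in> contracts_PC M B T gA \<kappa> y0 \<longleftrightarrow> \<beta> \<ge> betastar" for \<beta>
  proof -
    have "(Wb \<beta>, astar) \<in> contracts_PC M B T gA \<kappa> y0 \<longleftrightarrow> - exp (- gA * y0) \<le> - exp (E \<beta>)"
      unfolding contracts_PC_def contracts_def using WbW aH by (simp add: NEb expU_def)
    also have "\<dots> \<longleftrightarrow> E \<beta> \<le> - gA * y0" by simp
    also have "\<dots> \<longleftrightarrow> \<beta> \<ge> betastar" unfolding Eeq using gA_pos by (simp add: zero_le_mult_iff)
    finally show ?thesis .
  qed
  have Wstar_eq: "Wstar = Wb betastar" unfolding Wstar_def Wb_def ..
  have P2: "\<forall>\<beta>::real. ((\<lambda>\<omega>. c * Xproc x0 B astar T \<omega> + \<beta>), astar) \<in> contracts_PC M B T gA \<kappa> y0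
                   \<longleftrightarrow> \<beta> \<ge> betastar"
    using PCb unfolding Wb_def by simp
  have P3: "(Wstar, astar) \<in> contracts_PC M B T gA \<kappa> y0" unfolding Wstar_eq using PCb by simp
  have PV: "principal_value M B T x0 gP W a = - enn2ereal (\<integral>\<^sup>+\<omega>. ennreal (exp (- gP * (Xproc x0 B a T \<omega> - W \<omega>))) \<partial>M)"
    for W a
    unfolding principal_value_def neg_expect_def by (simp add: expU_def e2ennreal_ereal)
  have P4: "\<forall>(W, a) \<in> contracts_PC M B T gA \<kappa> y0.
          principal_value M B T x0 gP W a \<le> principal_value M B T x0 gP Wstar astar"
  proof (clarify)
    fix W a assume Wa: "(W, a) \<in> contracts_PC M B T gA \<kappa> y0"
    then have WW: "W \<in> Wset M B T" and aH2: "a \<in> H2 M B T"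
      and PC: "ereal (expU gA y0) \<le> neg_expect M (agent_util gA T \<kappa> W a)"
      unfolding contracts_PC_def contracts_def by auto
    have Ws: "\<And>\<omega>. Wstar \<omega> = c * (x0 + T * kstar + B T \<omega>) + betastar" unfolding Wstar_eq Wb_eq ..
    have Gs: "(\<integral>\<^sup>+\<omega>. ennreal (exp (- gA * (Wstar \<omega> - T * \<kappa> kstar))) \<partial>M) = ennreal (exp (- gA * y0))"
      unfolding Wstar_eq Gb Eeq by simp
    have opt: "(\<integral>\<^sup>+\<omega>. ennreal (exp (- gP * (x0 + T * kstar + B T \<omega> - Wstar \<omega>))) \<partial>M)
       \<le> (\<integral>\<^sup>+\<omega>. ennreal (exp (- gP * (Xproc x0 B a T \<omega> - W \<omega>))) \<partial>M)"
      by (rule optimality[OF BM T_pos gP_pos gA_pos kappa_cont tang aH2 WW PC Ws c_def[THEN meta_eq_to_obj_eq] Gs])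
    then show "principal_value M B T x0 gP W a \<le> principal_value M B T x0 gP Wstar astar"
      unfolding PV Xs by (simp add: ereal_minus_le_minus flip: less_eq_ennreal.rep_eq)
  qed
  have P1: "\<forall>W \<in> Wset M B T.
        (W, astar) \<in> contracts M B T \<and>
        ((\<exists>\<alpha>>0. AE \<omega> in M.
            deriv (expU gP) (Xproc x0 B astar T \<omega> - W \<omega>)
              / deriv (expU gA) (W \<omega> - (LBINT t:{0..T}. \<kappa> (astar t \<omega>))) = \<alpha>)
         \<longleftrightarrow> (\<exists>\<beta>::real. AE \<omega> in M. W \<omega> = c * Xproc x0 B astar T \<omega> + \<beta>))"
  proof
    fix W assume W: "W \<in> Wset M B T"
    have C: "(W, astar) \<in> contracts M B T" unfolding contracts_def using W aH by simp
    define R where "R = (\<lambda>\<omega>. gP * exp (- gP * (Xproc x0 B astar T \<omega> - W \<omega>)) / (gA * exp (- gA * (W \<omega> - T * \<kappa> kstar))))"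
    have Req: "deriv (expU gP) (Xproc x0 B astar T \<omega> - W \<omega>)
              / deriv (expU gA) (W \<omega> - (LBINT t:{0..T}. \<kappa> (astar t \<omega>))) = R \<omega>" for \<omega>
      unfolding R_def by (simp add: deriv_expU Kc)
    have "(\<exists>\<alpha>>0. AE \<omega> in M. R \<omega> = \<alpha>) \<longleftrightarrow> (\<exists>\<beta>::real. AE \<omega> in M. W \<omega> = c * Xproc x0 B astar T \<omega> + \<beta>)"
    proof
      assume "\<exists>\<alpha>>0. AE \<omega> in M. R \<omega> = \<alpha>"
      then obtain \<alpha> where a: "0 < \<alpha>" and ae: "AE \<omega> in M. R \<omega> = \<alpha>" by auto
      have "AE \<omega> in M. W \<omega> = c * Xproc x0 B astar T \<omega> + (ln (\<alpha> * gA / gP) + gA * (T * \<kappa> kstar)) / (gA + gP)"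
        using ae by eventually_elim (use borch_pt[OF gP_pos gA_pos a] in \<open>simp add: R_def c_def\<close>)
      then show "\<exists>\<beta>::real. AE \<omega> in M. W \<omega> = c * Xproc x0 B astar T \<omega> + \<beta>" by blast
    next
      assume "\<exists>\<beta>::real. AE \<omega> in M. W \<omega> = c * Xproc x0 B astar T \<omega> + \<beta>"
      then obtain \<beta> where ae: "AE \<omega> in M. W \<omega> = c * Xproc x0 B astar T \<omega> + \<beta>" by auto
      define \<alpha> where "\<alpha> = gP / gA * exp ((gA + gP) * \<beta> - gA * (T * \<kappa> kstar))"
      have a: "0 < \<alpha>" unfolding \<alpha>_def using gP_pos gA_pos by simp
      have la: "ln (\<alpha> * gA / gP) = (gA + gP) * \<beta> - gA * (T * \<kappa> kstar)"
        unfolding \<alpha>_def using gP_pos gA_pos by simp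
      have bb: "(ln (\<alpha> * gA / gP) + gA * (T * \<kappa> kstar)) / (gA + gP) = \<beta>"
        unfolding la using gP_pos gA_pos by simp
      have "AE \<omega> in M. R \<omega> = \<alpha>"
        using ae by eventually_elim (use borch_pt[OF gP_pos gA_pos a] bb in \<open>simp add: R_def c_def\<close>)
      then show "\<exists>\<alpha>>0. AE \<omega> in M. R \<omega> = \<alpha>" using a by blast
    qed
    then show "(W, astar) \<in> contracts M B T \<and>
        ((\<exists>\<alpha>>0. AE \<omega> in M.
            deriv (expU gP) (Xproc x0 B astar T \<omega> - W \<omega>)
              / deriv (expU gA) (W \<omega> - (LBINT t:{0..T}. \<kappa> (astar t \<omega>))) = \<alpha>)
         \<longleftrightarrow> (\<exists>\<beta>::real. AE \<omega> in M. W \<omega> = c * Xproc x0 B astar T \<omega> + \<beta>))"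
      using C unfolding Req by simp
  qed
  show ?thesis using P1 P2 P3 P4 by blast
qed

end
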